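(* In the marked Hawkes model described in the context (with $\kappa<1$), if $X=f(A)\in\mathrm{MDA}(G)$, then the maximal claim size $H$ in one cluster also belongs to $\mathrm{MDA}(G)$.
   Context: $G$ is one of the three extreme value distributions, $\mathbb E=\{y:G(y)>0\}$; a real random variable $X$ belongs to $\mathrm{MDA}(G)$ if there exist $a_n>0,b_n\in\mathbb R$ with $n\,\mathbb P(X>a_nx+b_n)\to-\log G(x)$ for all $x\in\mathbb E$. Marked Hawkes model (cluster representation): $\mathbb S$ is a Polish space, $Q$ a probability on $\mathbb S$, $f:\mathbb S\to\mathbb R_+$ measurable, $\nu>0$, and $h:[0,\infty)\times\mathbb S\to\mathbb R_+$ measurable with $\kappa_a=\int_0^\infty h(s,a)\,ds$ and $\kappa=\mathbb E[\kappa_A]<1$, $A\sim Q$. The immigrants $(\Gamma_i,A_i)$ form a Poisson process on $[0,\infty)\times\mathbb S$ with mean measure $\nu\,ds\times Q$. Each immigrant generates a cluster: it contains the point $(\Gamma_i,A_i)$; recursively, given a point of the cluster at time $s$ with mark $a$, its direct offspring form (conditionally on all previous generations, independently over points) a Poisson process on $[s,\infty)\times\mathbb S$ with mean measure $h(u-s,a)\,du\times Q(db)$; the cluster consists of all points of all generations, and $K+1$ denotes its (a.s. finite) total number of points. All marks are i.i.d. with law $Q$. The maximal claim size in one cluster is $H=\max\{f(b):(u,b)\text{ a point of the cluster}\}$, and $X=f(A)$, $A\sim Q$. *)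

theory Defs
  imports "HOL-Probability.Probability"
begin

definition frechet :: "real \<Rightarrow> real \<Rightarrow> real" where
  "frechet \<alpha> x = (if x > 0 then exp (- (x powr (- \<alpha>))) else 0)"

definition weibull :: "real \<Rightarrow> real \<Rightarrow> real" where
  "weibull \<alpha> x = (if x < 0 then exp (- ((- x) powr \<alpha>)) else 1)"

definition gumbel :: "real \<Rightarrow> real" where
  "gumbel x = exp (- exp (- x))"

definition extreme_value_df :: "(real \<Rightarrow> real) \<Rightarrow> bool" where
  "extreme_value_df G \<longleftrightarrow>
     (\<exists>\<alpha>>0. G = frechet \<alpha>) \<or> (\<exists>\<alpha>>0. G = weibull \<alpha>) \<or> G = gumbel"

text \<open>A random variable with tail function T t = P(X > t) belongs to MDA(G).\<close>
definition in_MDA :: "(real \<Rightarrow> real) \<Rightarrow> (real \<Rightarrow> real) \<Rightarrow> bool" where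
  "in_MDA G T \<longleftrightarrow>
     (\<exists>a b :: nat \<Rightarrow> real. (\<forall>n. a n > 0) \<and>
        (\<forall>x\<in>{y. G y > 0}. (\<lambda>n. real n * T (a n * x + b n)) \<longlonglongrightarrow> - ln (G x)))"

definition hawkes_kappa :: "(real \<Rightarrow> 's \<Rightarrow> real) \<Rightarrow> 's \<Rightarrow> ennreal" where
  "hawkes_kappa h a = (\<integral>\<^sup>+ s. ennreal (h s a) * indicator {0..} s \<partial>lborel)"

definition poisson_prob :: "real \<Rightarrow> nat \<Rightarrow> real" where
  "poisson_prob r k = r ^ k / fact k * exp (- r)"

text \<open>Points of the cluster are labelled by Ulam--Harris words; the root [] is the
  immigrant, v @ [i] is the i-th direct offspring of v, which exists iff i < N v.\<close>
inductive in_cluster :: "(nat list \<Rightarrow> nat) \<Rightarrow> nat list \<Rightarrow> bool" for N where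
  root: "in_cluster N []"
| child: "in_cluster N v \<Longrightarrow> i < N v \<Longrightarrow> in_cluster N (v @ [i])"

definition cluster_max :: "('s \<Rightarrow> real) \<Rightarrow> (nat list \<Rightarrow> 's) \<Rightarrow> (nat list \<Rightarrow> nat) \<Rightarrow> real" where
  "cluster_max f A N = Sup {f (A v) | v. in_cluster N v}"

end

theory Submission
  imports Defs
begin

lemma poisson_nonneg: "0 \<le> r \<Longrightarrow> 0 \<le> poisson_prob r k"
  by (simp add: poisson_prob_def)

lemma poisson_sums: "(\<lambda>k. poisson_prob r k) sums 1"
proof -
  have "(\<lambda>k. r ^ k /\<^sub>R fact k * exp (- r)) sums (exp r * exp (- r))"
    by (rule sums_mult2[OF exp_converges])
  moreover have "(\<lambda>k. r ^ k /\<^sub>R fact k * exp (- r)) = (\<lambda>k. poisson_prob r k)"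
    by (rule ext) (simp add: poisson_prob_def divide_inverse mult.commute)
  ultimately show ?thesis by (simp add: exp_minus_inverse)
qed

lemma poisson_mean_sums: "(\<lambda>k. real k * poisson_prob r k) sums r"
proof -
  have "(\<lambda>k. r * (r ^ k /\<^sub>R fact k * exp (- r))) sums (r * (exp r * exp (- r)))"
    by (rule sums_mult[OF sums_mult2[OF exp_converges]])
  moreover have "(\<lambda>k. r * (r ^ k /\<^sub>R fact k * exp (- r))) = (\<lambda>k. real (Suc k) * poisson_prob r (Suc k))"
  proof (rule ext)
    fix k
    have "real (Suc k) * poisson_prob r (Suc k) = real (Suc k) * (r * r ^ k) / (real (Suc k) * fact k) * exp (- r)"
      by (simp add: poisson_prob_def)
    also have "\<dots> = r * r ^ k / fact k * exp (- r)"
      by (simp del: of_nat_Suc)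
    finally show "r * (r ^ k /\<^sub>R fact k * exp (- r)) = real (Suc k) * poisson_prob r (Suc k)"
      by (simp add: divide_inverse mult.commute mult.left_commute)
  qed
  ultimately have "(\<lambda>k. real (Suc k) * poisson_prob r (Suc k)) sums r"
    by (simp add: exp_minus_inverse)
  then show ?thesis
    by (subst (asm) sums_Suc_iff) simp
qed

locale hawkes =
  fixes Q :: "'s measure"
    and f :: "'s \<Rightarrow> real"
    and h :: "real \<Rightarrow> 's \<Rightarrow> real"
    and M :: "'w measure"
    and A :: "nat list \<Rightarrow> 'w \<Rightarrow> 's"
    and N :: "nat list \<Rightarrow> 'w \<Rightarrow> nat"
  assumes Q_prob: "prob_space Q"
    and f_meas[measurable]: "f \<in> borel_measurable Q"
    and h_meas: "(\<lambda>(s, a). h s a) \<in> borel_measurable (borel \<Otimes>\<^sub>M Q)"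
    and h_nonneg: "\<And>s a. h s a \<ge> 0"
    and kappa_lt_1: "(\<integral>\<^sup>+ a. hawkes_kappa h a \<partial>Q) < 1"
    and M_prob: "prob_space M"
    and indep: "prob_space.indep_vars M (\<lambda>_. Q \<Otimes>\<^sub>M count_space UNIV)
                  (\<lambda>v \<omega>. (A v \<omega>, N v \<omega>)) UNIV"
    and law: "\<And>v B k. B \<in> sets Q \<Longrightarrow>
                measure M {\<omega> \<in> space M. A v \<omega> \<in> B \<and> N v \<omega> = k}
                = (\<integral>a\<in>B. poisson_prob (enn2real (hawkes_kappa h a)) k \<partial>Q)"
begin

sublocale prob_space M by (rule M_prob)

interpretation Qp: prob_space Q by (rule Q_prob)

definition kap :: "'s \<Rightarrow> real" where "kap a = enn2real (hawkes_kappa h a)"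
definition lw :: "'s set \<Rightarrow> nat \<Rightarrow> real" where
  "lw B k = (\<integral>a\<in>B. poisson_prob (kap a) k \<partial>Q)"

lemma kap_nonneg: "0 \<le> kap a" by (simp add: kap_def)

lemma rv: "(\<lambda>\<omega>. (A v \<omega>, N v \<omega>)) \<in> M \<rightarrow>\<^sub>M Q \<Otimes>\<^sub>M count_space UNIV"
  using indep unfolding indep_vars_def by auto

lemma A_meas[measurable]: "A v \<in> M \<rightarrow>\<^sub>M Q"
  using measurable_compose[OF rv measurable_fst] by simp

lemma N_meas[measurable]: "N v \<in> M \<rightarrow>\<^sub>M count_space UNIV"
  using measurable_compose[OF rv measurable_snd] by simp

lemma hk_meas[measurable]: "(\<lambda>a. hawkes_kappa h a) \<in> borel_measurable Q"
proof -
  have hm: "(\<lambda>x. h (fst x) (snd x)) \<in> borel_measurable (borel \<Otimes>\<^sub>M Q)"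
    using h_meas by (simp add: case_prod_beta')
  have sw: "(\<lambda>x. (snd x, fst x)) \<in> Q \<Otimes>\<^sub>M lborel \<rightarrow>\<^sub>M borel \<Otimes>\<^sub>M Q"
    by (intro measurable_Pair) (auto intro: measurable_compose[OF measurable_snd] )
  have "(\<lambda>x. h (snd x) (fst x)) \<in> borel_measurable (Q \<Otimes>\<^sub>M lborel)"
    using measurable_compose[OF sw hm] by simp
  then have "(\<lambda>x. ennreal (h (snd x) (fst x)) * indicator {0..} (snd x)) \<in> borel_measurable (Q \<Otimes>\<^sub>M lborel)"
    by measurable
  from lborel.borel_measurable_nn_integral_fst[OF this]
  show ?thesis unfolding hawkes_kappa_def by simp
qed

lemma kap_meas[measurable]: "kap \<in> borel_measurable Q"
  unfolding kap_def by measurable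

lemma pk_meas[measurable]: "(\<lambda>a. poisson_prob (kap a) k) \<in> borel_measurable Q"
  unfolding poisson_prob_def by measurable

lemma lw_ennreal: assumes B: "B \<in> sets Q"
  shows "ennreal (lw B k) = (\<integral>\<^sup>+a. indicator B a * ennreal (poisson_prob (kap a) k) \<partial>Q)"
proof -
  have int: "integrable Q (\<lambda>a. indicator B a *\<^sub>R poisson_prob (kap a) k)"
  proof (rule Qp.integrable_const_bound[where B=1])
    have "poisson_prob (kap a) k \<le> 1" for a
    proof -
      have "sum (poisson_prob (kap a)) {k} \<le> suminf (poisson_prob (kap a))"
        using poisson_sums[of "kap a"] poisson_nonneg[OF kap_nonneg]
        by (intro sum_le_suminf) (auto simp: sums_iff)
      then have "poisson_prob (kap a) k \<le> (\<Sum>j. poisson_prob (kap a) j)" by simp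
      then show ?thesis using poisson_sums[of "kap a"] by (simp add: sums_iff)
    qed
    then show "AE x in Q. norm (indicator B x *\<^sub>R poisson_prob (kap x) k) \<le> 1"
      using poisson_nonneg[OF kap_nonneg] by (auto simp: indicator_def)
    show "(\<lambda>a. indicator B a *\<^sub>R poisson_prob (kap a) k) \<in> borel_measurable Q"
      using B by measurable
  qed
  have "(\<integral>\<^sup>+a. ennreal (indicator B a *\<^sub>R poisson_prob (kap a) k) \<partial>Q) = ennreal (lw B k)"
    unfolding lw_def set_lebesgue_integral_def
    by (rule nn_integral_eq_integral[OF int]) (auto simp: poisson_nonneg kap_nonneg)
  moreover have "\<And>a. ennreal (indicator B a *\<^sub>R poisson_prob (kap a) k) = indicator B a * ennreal (poisson_prob (kap a) k)"
    by (auto simp: indicator_def)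
  ultimately show ?thesis by simp
qed

lemma lw_space: "ennreal (lw (space Q) k) = (\<integral>\<^sup>+a. ennreal (poisson_prob (kap a) k) \<partial>Q)"
  by (subst lw_ennreal) (auto intro!: nn_integral_cong)

lemma law_set: assumes B: "B \<in> sets Q"
  shows "emeasure M {\<omega>\<in>space M. A v \<omega> \<in> B \<and> N v \<omega> \<in> K} = (\<integral>\<^sup>+k. ennreal (lw B k) \<partial>count_space K)"
proof -
  have "{\<omega>\<in>space M. A v \<omega> \<in> B \<and> N v \<omega> \<in> K} = (\<Union>k\<in>K. {\<omega>\<in>space M. A v \<omega> \<in> B \<and> N v \<omega> = k})"
    by auto
  also have "emeasure M \<dots> = (\<integral>\<^sup>+k. emeasure M {\<omega>\<in>space M. A v \<omega> \<in> B \<and> N v \<omega> = k} \<partial>count_space K)"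
    using B by (intro emeasure_UN_countable) (auto simp: disjoint_family_on_def)
  also have "\<dots> = (\<integral>\<^sup>+k. ennreal (lw B k) \<partial>count_space K)"
    using B by (intro nn_integral_cong) (simp add: emeasure_eq_measure law lw_def kap_def)
  finally show ?thesis .
qed

lemma law_indep: assumes B: "B \<in> sets Q"
  shows "emeasure M {\<omega>\<in>space M. A v \<omega> \<in> B \<and> N v \<omega> \<in> K} = emeasure M {\<omega>\<in>space M. A [] \<omega> \<in> B \<and> N [] \<omega> \<in> K}"
  using law_set[OF B] by simp

lemma lw_sum: assumes B: "B \<in> sets Q"
  shows "(\<integral>\<^sup>+k. ennreal (lw B k) \<partial>count_space UNIV) = emeasure Q B"
proof -
  have [measurable]: "B \<in> sets Q" by (rule B)
have "(\<integral>\<^sup>+k. ennreal (lw B k) \<partial>count_space UNIV) = (\<Sum>k. \<integral>\<^sup>+a. indicator B a * ennreal (poisson_prob (kap a) k) \<partial>Q)"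
    by (simp add: nn_integral_count_space_nat lw_ennreal[OF B])
  also have "\<dots> = (\<integral>\<^sup>+a. (\<Sum>k. indicator B a * ennreal (poisson_prob (kap a) k)) \<partial>Q)"
    using B by (intro nn_integral_suminf[symmetric]) measurable
  also have "\<dots> = (\<integral>\<^sup>+a. indicator B a \<partial>Q)"
  proof (intro nn_integral_cong)
    fix a
    have "(\<Sum>k. ennreal (poisson_prob (kap a) k)) = ennreal (\<Sum>k. poisson_prob (kap a) k)"
      using poisson_sums[of "kap a"] by (intro suminf_ennreal2) (auto simp: poisson_nonneg kap_nonneg sums_iff)
    also have "\<dots> = 1" using poisson_sums[of "kap a"] by (simp add: sums_iff)
    finally show "(\<Sum>k. indicator B a * ennreal (poisson_prob (kap a) k)) = indicator B a" by simp
  qed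
  also have "\<dots> = emeasure Q B" using B by simp
  finally show ?thesis .
qed

lemma P_A: assumes B: "B \<in> sets Q"
  shows "emeasure M {\<omega>\<in>space M. A v \<omega> \<in> B} = emeasure Q B"
  using law_set[OF B, of v UNIV] lw_sum[OF B] by simp

lemma EN: "(\<integral>\<^sup>+\<omega>. of_nat (N v \<omega>) \<partial>M) < 1"
proof -
  have "(\<integral>\<^sup>+\<omega>. of_nat (N v \<omega>) \<partial>M) = (\<integral>\<^sup>+\<omega>. \<integral>\<^sup>+k. of_nat k * indicator {\<omega>'\<in>space M. N v \<omega>' = k} \<omega> \<partial>count_space UNIV \<partial>M)"
  proof (intro nn_integral_cong)
    fix \<omega> assume "\<omega> \<in> space M"
    then have "(\<integral>\<^sup>+k. of_nat k * indicator {\<omega>'\<in>space M. N v \<omega>' = k} \<omega> \<partial>count_space UNIV)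
       = (\<integral>\<^sup>+k. of_nat k * indicator {N v \<omega>} k \<partial>count_space UNIV)"
      by (intro nn_integral_cong) (auto simp: indicator_def)
    also have "\<dots> = of_nat (N v \<omega>)"
      by (subst nn_integral_indicator_singleton) auto
    finally show "of_nat (N v \<omega>) = (\<integral>\<^sup>+k. of_nat k * indicator {\<omega>'\<in>space M. N v \<omega>' = k} \<omega> \<partial>count_space UNIV)" ..
  qed
  also have "\<dots> = (\<integral>\<^sup>+k. \<integral>\<^sup>+\<omega>. of_nat k * indicator {\<omega>'\<in>space M. N v \<omega>' = k} \<omega> \<partial>M \<partial>count_space UNIV)"
    by (intro nn_integral_count_space_nn_integral) auto
  also have "\<dots> = (\<integral>\<^sup>+k. of_nat k * ennreal (lw (space Q) k) \<partial>count_space UNIV)"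
  proof (intro nn_integral_cong)
    fix k :: nat
    have "emeasure M {\<omega>'\<in>space M. N v \<omega>' = k} = emeasure M {\<omega>\<in>space M. A v \<omega> \<in> space Q \<and> N v \<omega> \<in> {k}}"
      by (intro arg_cong[where f="emeasure M"]) (auto simp: measurable_space[OF A_meas])
    also have "\<dots> = ennreal (lw (space Q) k)"
      by (subst law_set) (auto simp: nn_integral_count_space_finite)
    finally show "(\<integral>\<^sup>+\<omega>. of_nat k * indicator {\<omega>'\<in>space M. N v \<omega>' = k} \<omega> \<partial>M) = of_nat k * ennreal (lw (space Q) k)"
      by (subst nn_integral_cmult_indicator) auto
  qed
  also have "\<dots> = (\<Sum>k. \<integral>\<^sup>+a. of_nat k * ennreal (poisson_prob (kap a) k) \<partial>Q)"
    by (simp add: nn_integral_count_space_nat lw_ennreal nn_integral_cmult lw_space)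
  also have "\<dots> = (\<integral>\<^sup>+a. (\<Sum>k. of_nat k * ennreal (poisson_prob (kap a) k)) \<partial>Q)"
    by (intro nn_integral_suminf[symmetric]) measurable
  also have "\<dots> = (\<integral>\<^sup>+a. ennreal (kap a) \<partial>Q)"
  proof (intro nn_integral_cong)
    fix a
    have "(\<Sum>k. of_nat k * ennreal (poisson_prob (kap a) k)) = (\<Sum>k. ennreal (real k * poisson_prob (kap a) k))"
      by (simp add: ennreal_mult' ennreal_of_nat_eq_real_of_nat)
    also have "\<dots> = ennreal (\<Sum>k. real k * poisson_prob (kap a) k)"
      using poisson_mean_sums[of "kap a"] by (intro suminf_ennreal2) (auto simp: poisson_nonneg kap_nonneg sums_iff)
    also have "\<dots> = ennreal (kap a)" using poisson_mean_sums[of "kap a"] by (simp add: sums_iff)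
    finally show "(\<Sum>k. of_nat k * ennreal (poisson_prob (kap a) k)) = ennreal (kap a)" .
  qed
  also have "\<dots> \<le> (\<integral>\<^sup>+a. hawkes_kappa h a \<partial>Q)"
    by (intro nn_integral_mono) (auto simp: kap_def ennreal_enn2real_if)
  also have "\<dots> < 1" by (rule kappa_lt_1)
  finally show ?thesis .
qed

end

lemma in_cluster_snoc: "in_cluster Nf (v @ [i]) \<longleftrightarrow> in_cluster Nf v \<and> i < Nf v"
proof
  assume "in_cluster Nf (v @ [i])"
  then show "in_cluster Nf v \<and> i < Nf v"
    by (cases rule: in_cluster.cases) auto
next
  assume "in_cluster Nf v \<and> i < Nf v"
  then show "in_cluster Nf (v @ [i])" by (auto intro: in_cluster.child)
qed

lemma incl_char: "in_cluster Nf v \<longleftrightarrow> (\<forall>k<length v. v ! k < Nf (take k v))"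
proof (induction v rule: rev_induct)
  case Nil
  then show ?case by (auto intro: in_cluster.root)
next
  case (snoc i v)
  have "(\<forall>k<length (v @ [i]). (v @ [i]) ! k < Nf (take k (v @ [i]))) \<longleftrightarrow>
        (\<forall>k<length v. v ! k < Nf (take k v)) \<and> i < Nf v"
    by (auto simp: nth_append less_Suc_eq)
  then show ?case using snoc by (simp add: in_cluster_snoc)
qed

definition pre :: "nat list \<Rightarrow> nat list set" where
  "pre w = (\<lambda>k. take k w) ` {..<length w}"

lemma finite_pre[simp]: "finite (pre w)" by (simp add: pre_def)

lemma inj_take: "inj_on (\<lambda>k. take k w) {..<length w}"
  by (auto simp: inj_on_def) (metis length_take min.absorb4)

lemma not_in_pre: "w \<notin> pre w"
proof
  assume "w \<in> pre w"
  then obtain k where k: "k < length w" "w = take k w" by (auto simp: pre_def)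
  have "length (take k w) = k" using k(1) by simp
  then have "length w = k" using k(2) by metis
  with k(1) show False by simp
qed

lemma in_pre_iff: "j \<in> pre w \<longleftrightarrow> length j < length w \<and> take (length j) w = j"
  by (auto simp: pre_def) (metis lessThan_iff image_eqI)

lemma incl_pre: "in_cluster Nf w \<longleftrightarrow> (\<forall>j\<in>pre w. w ! length j < Nf j)"
  unfolding incl_char pre_def by auto

context hawkes
begin

interpretation Qp: prob_space Q by (rule Q_prob)

lemma incl_pred[measurable]: "Measurable.pred M (\<lambda>\<omega>. in_cluster (\<lambda>u. N u \<omega>) v)"
proof -
  have "(\<lambda>\<omega>. in_cluster (\<lambda>u. N u \<omega>) v) = (\<lambda>\<omega>. \<forall>k\<in>{..<length v}. v ! k < N (take k v) \<omega>)"
    by (auto simp: incl_char)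
  moreover have "Measurable.pred M (\<lambda>\<omega>. \<forall>k\<in>{..<length v}. v ! k < N (take k v) \<omega>)"
    by measurable
  ultimately show ?thesis by simp
qed

lemma prodF:
  assumes J: "finite J" and B: "\<And>j. j \<in> J \<Longrightarrow> B j \<in> sets (Q \<Otimes>\<^sub>M count_space UNIV)"
  shows "emeasure M {\<omega>\<in>space M. \<forall>j\<in>J. (A j \<omega>, N j \<omega>) \<in> B j}
       = (\<Prod>j\<in>J. emeasure M {\<omega>\<in>space M. (A j \<omega>, N j \<omega>) \<in> B j})"
proof (cases "J = {}")
  case True then show ?thesis by (simp add: emeasure_space_1)
next
  case False
  have eq: "{\<omega>\<in>space M. \<forall>j\<in>J. (A j \<omega>, N j \<omega>) \<in> B j} = (\<Inter>j\<in>J. (\<lambda>\<omega>. (A j \<omega>, N j \<omega>)) -` B j \<inter> space M)"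
    using False by auto
  have "prob (\<Inter>j\<in>J. (\<lambda>\<omega>. (A j \<omega>, N j \<omega>)) -` B j \<inter> space M) =
        (\<Prod>j\<in>J. prob ((\<lambda>\<omega>. (A j \<omega>, N j \<omega>)) -` B j \<inter> space M))"
    by (rule indep_varsD[OF indep False J]) (auto simp: B)
  moreover have "\<And>j. (\<lambda>\<omega>. (A j \<omega>, N j \<omega>)) -` B j \<inter> space M = {\<omega>\<in>space M. (A j \<omega>, N j \<omega>) \<in> B j}"
    by auto
  ultimately show ?thesis
    unfolding eq by (simp add: emeasure_eq_measure prod_ennreal)
qed

definition gg :: "nat \<Rightarrow> real" where "gg i = measure M {\<omega>\<in>space M. i < N [] \<omega>}"
definition TT :: "real \<Rightarrow> real" where "TT t = measure Q {a\<in>space Q. t < f a}"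
definition mm :: "real \<Rightarrow> nat \<Rightarrow> real" where
  "mm t i = measure M {\<omega>\<in>space M. t < f (A [] \<omega>) \<and> i < N [] \<omega>}"
definition pth :: "nat list \<Rightarrow> real" where "pth v = (\<Prod>k<length v. gg (v ! k))"

lemma gg_nonneg: "0 \<le> gg i" and gg_le1: "gg i \<le> 1" by (auto simp: gg_def)
lemma TT_nonneg: "0 \<le> TT t" and TT_le1: "TT t \<le> 1"
  by (auto simp: TT_def intro: Qp.prob_le_1)
lemma mm_nonneg: "0 \<le> mm t i" by (simp add: mm_def)
lemma pth_nonneg: "0 \<le> pth v" by (simp add: pth_def prod_nonneg gg_nonneg)
lemma pth_le1: "pth v \<le> 1" by (simp add: pth_def prod_le_1 gg_nonneg gg_le1)
lemma pth_Nil[simp]: "pth [] = 1" by (simp add: pth_def)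
lemma pth_Cons: "pth (i # u) = gg i * pth u"
  by (simp add: pth_def prod.lessThan_Suc_shift del: prod.lessThan_Suc)

lemma ev_g: "emeasure M {\<omega>\<in>space M. (A v \<omega>, N v \<omega>) \<in> space Q \<times> {n. i < n}} = ennreal (gg i)"
proof -
  have "emeasure M {\<omega>\<in>space M. (A v \<omega>, N v \<omega>) \<in> space Q \<times> {n. i < n}}
      = emeasure M {\<omega>\<in>space M. A v \<omega> \<in> space Q \<and> N v \<omega> \<in> {n. i < n}}" by simp
  also have "\<dots> = emeasure M {\<omega>\<in>space M. A [] \<omega> \<in> space Q \<and> N [] \<omega> \<in> {n. i < n}}"
    by (rule law_indep) simp
  also have "\<dots> = emeasure M {\<omega>\<in>space M. i < N [] \<omega>}"
    by (intro arg_cong[where f="emeasure M"]) (auto simp: measurable_space[OF A_meas])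
  finally show ?thesis by (simp add: gg_def emeasure_eq_measure)
qed

lemma ev_T: "emeasure M {\<omega>\<in>space M. (A v \<omega>, N v \<omega>) \<in> {a\<in>space Q. t < f a} \<times> UNIV} = ennreal (TT t)"
proof -
  have "emeasure M {\<omega>\<in>space M. (A v \<omega>, N v \<omega>) \<in> {a\<in>space Q. t < f a} \<times> UNIV}
      = emeasure M {\<omega>\<in>space M. A v \<omega> \<in> {a\<in>space Q. t < f a}}" by simp
  also have "\<dots> = emeasure Q {a\<in>space Q. t < f a}" by (rule P_A) measurable
  finally show ?thesis by (simp add: TT_def Qp.emeasure_eq_measure)
qed

lemma ev_m: "emeasure M {\<omega>\<in>space M. (A v \<omega>, N v \<omega>) \<in> {a\<in>space Q. t < f a} \<times> {n. i < n}} = ennreal (mm t i)"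
proof -
  have "emeasure M {\<omega>\<in>space M. (A v \<omega>, N v \<omega>) \<in> {a\<in>space Q. t < f a} \<times> {n. i < n}}
      = emeasure M {\<omega>\<in>space M. A v \<omega> \<in> {a\<in>space Q. t < f a} \<and> N v \<omega> \<in> {n. i < n}}" by simp
  also have "\<dots> = emeasure M {\<omega>\<in>space M. A [] \<omega> \<in> {a\<in>space Q. t < f a} \<and> N [] \<omega> \<in> {n. i < n}}"
    by (rule law_indep) measurable
  also have "\<dots> = emeasure M {\<omega>\<in>space M. t < f (A [] \<omega>) \<and> i < N [] \<omega>}"
    by (intro arg_cong[where f="emeasure M"]) (auto simp: measurable_space[OF A_meas])
  finally show ?thesis by (simp add: mm_def emeasure_eq_measure)
qed

lemma ev_g': "emeasure M {\<omega>\<in>space M. A v \<omega> \<in> space Q \<and> i < N v \<omega>} = ennreal (gg i)"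
  using ev_g[of v i] by simp
lemma ev_T': "emeasure M {\<omega>\<in>space M. A v \<omega> \<in> space Q \<and> t < f (A v \<omega>)} = ennreal (TT t)"
  using ev_T[of v t] by simp
lemma ev_m': "emeasure M {\<omega>\<in>space M. (A v \<omega> \<in> space Q \<and> t < f (A v \<omega>)) \<and> i < N v \<omega>} = ennreal (mm t i)"
  using ev_m[of v t i] by simp

lemma mm_le_T: "mm t i \<le> TT t"
proof -
  have "emeasure M {\<omega>\<in>space M. t < f (A [] \<omega>) \<and> i < N [] \<omega>} \<le> emeasure M {\<omega>\<in>space M. A [] \<omega> \<in> {a\<in>space Q. t < f a}}"
    by (intro emeasure_mono) (auto simp: measurable_space[OF A_meas])
  also have "\<dots> = ennreal (TT t)" using ev_T[of "[]" t] by simp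
  finally show ?thesis by (simp add: mm_def emeasure_eq_measure TT_nonneg)
qed

lemma mm_le_g: "mm t i \<le> gg i"
  unfolding mm_def gg_def by (intro finite_measure_mono) auto

lemma sets_T[measurable]: "{a\<in>space Q. t < f a} \<in> sets Q" by measurable

definition EE :: "real \<Rightarrow> nat list \<Rightarrow> 'w set" where
  "EE t v = {\<omega>\<in>space M. in_cluster (\<lambda>u. N u \<omega>) v \<and> t < f (A v \<omega>)}"

lemma EE_sets[measurable]: "EE t v \<in> sets M"
  unfolding EE_def by measurable

lemma prod_pre: "(\<Prod>j\<in>pre w. F j) = (\<Prod>k<length w. F (take k w))"
  unfolding pre_def by (rule prod.reindex[OF inj_take, unfolded comp_def])

lemma P_EE: "emeasure M (EE t v) = ennreal (pth v * TT t)"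
proof -
  define B where "B j = (if j = v then {a\<in>space Q. t < f a} \<times> UNIV else space Q \<times> {n. v ! length j < n})" for j
  have Bs: "B j \<in> sets (Q \<Otimes>\<^sub>M count_space UNIV)" for j
    unfolding B_def by auto
  have eq: "EE t v = {\<omega>\<in>space M. \<forall>j\<in>insert v (pre v). (A j \<omega>, N j \<omega>) \<in> B j}"
    using not_in_pre[of v]
    by (auto simp: EE_def B_def incl_pre measurable_space[OF A_meas] split: if_splits)
  have "emeasure M (EE t v) = (\<Prod>j\<in>insert v (pre v). emeasure M {\<omega>\<in>space M. (A j \<omega>, N j \<omega>) \<in> B j})"
    unfolding eq by (rule prodF) (auto simp: Bs)
  also have "\<dots> = emeasure M {\<omega>\<in>space M. (A v \<omega>, N v \<omega>) \<in> B v} * (\<Prod>j\<in>pre v. emeasure M {\<omega>\<in>space M. (A j \<omega>, N j \<omega>) \<in> B j})"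
    using not_in_pre[of v] by simp
  also have "(\<Prod>j\<in>pre v. emeasure M {\<omega>\<in>space M. (A j \<omega>, N j \<omega>) \<in> B j}) = (\<Prod>j\<in>pre v. ennreal (gg (v ! length j)))"
    using not_in_pre[of v] by (intro prod.cong refl) (auto simp: B_def ev_g')
  also have "\<dots> = ennreal (pth v)"
    by (simp add: prod_pre pth_def prod_ennreal gg_nonneg min_def)
  finally show ?thesis
    by (simp add: B_def ev_T' ennreal_mult' TT_nonneg pth_nonneg mult.commute)
qed

end

definition desc :: "nat list \<Rightarrow> nat list set" where
  "desc v = {w. \<exists>i u. w = v @ i # u}"

lemma nn_desc:
  fixes F :: "nat list \<Rightarrow> ennreal"
  shows "(\<integral>\<^sup>+w. F w * indicator (desc v) w \<partial>count_space UNIV)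
       = (\<integral>\<^sup>+i. \<integral>\<^sup>+u. F (v @ i # u) \<partial>count_space UNIV \<partial>count_space UNIV)"
proof -
  have bij: "bij_betw (\<lambda>p. v @ fst p # snd p) UNIV (desc v)"
    by (auto simp: bij_betw_def inj_on_def desc_def image_def)
  have "(\<integral>\<^sup>+w. F w * indicator (desc v) w \<partial>count_space UNIV) = (\<integral>\<^sup>+w. F w \<partial>count_space (desc v))"
    by (simp add: nn_integral_count_space_indicator)
  also have "\<dots> = (\<integral>\<^sup>+p. F (v @ fst p # snd p) \<partial>count_space UNIV)"
    by (rule nn_integral_bij_count_space[OF bij, symmetric])
  also have "\<dots> = (\<integral>\<^sup>+i. \<integral>\<^sup>+u. F (v @ i # u) \<partial>count_space UNIV \<partial>count_space UNIV)"
    using nn_integral_fst_count_space[of "\<lambda>p. F (v @ fst p # snd p)"] by simp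
  finally show ?thesis .
qed

lemma nn_split:
  fixes F :: "nat list \<Rightarrow> ennreal"
  shows "(\<integral>\<^sup>+w. F w \<partial>count_space UNIV)
       = F [] + (\<integral>\<^sup>+i. \<integral>\<^sup>+u. F (i # u) \<partial>count_space UNIV \<partial>count_space UNIV)"
proof -
  have "\<And>w. F w = F w * indicator {[]} w + F w * indicator (desc []) w"
    by (case_tac w) (auto simp: desc_def indicator_def)
  then have "(\<integral>\<^sup>+w. F w \<partial>count_space UNIV) = (\<integral>\<^sup>+w. F w * indicator {[]} w + F w * indicator (desc []) w \<partial>count_space UNIV)"
    by simp
  also have "\<dots> = (\<integral>\<^sup>+w. F w * indicator {[]} w \<partial>count_space UNIV) + (\<integral>\<^sup>+w. F w * indicator (desc []) w \<partial>count_space UNIV)"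
    by (rule nn_integral_add) auto
  also have "(\<integral>\<^sup>+w. F w * indicator {[]} w \<partial>count_space UNIV) = F []"
    by (subst nn_integral_indicator_singleton) auto
  finally show ?thesis using nn_desc[of F "[]"] by simp
qed

context hawkes
begin

interpretation Qp: prob_space Q by (rule Q_prob)

definition GG :: real where "GG = (\<Sum>i. gg i)"

lemma gg_sum: "summable gg" "GG < 1" "(\<Sum>i. ennreal (gg i)) = ennreal GG"
proof -
  have "(\<integral>\<^sup>+\<omega>. of_nat (N [] \<omega>) \<partial>M) = (\<Sum>i. emeasure M {\<omega>\<in>space M. i < N [] \<omega>})"
    by (rule nn_integral_nat_function) measurable
  also have "\<dots> = (\<Sum>i. ennreal (gg i))" by (simp add: gg_def emeasure_eq_measure)
  finally have e: "(\<Sum>i. ennreal (gg i)) < 1" using EN[of "[]"] by simp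
  show s: "summable gg"
    by (rule summable_suminf_not_top) (use e gg_nonneg in auto)
  show eq: "(\<Sum>i. ennreal (gg i)) = ennreal GG"
    unfolding GG_def by (rule suminf_ennreal2[OF gg_nonneg s])
  show "GG < 1" using e unfolding eq by (simp add: ennreal_less_iff[symmetric] del: ennreal_1)
qed

lemma GG_nonneg: "0 \<le> GG"
  unfolding GG_def by (rule suminf_nonneg[OF gg_sum(1) gg_nonneg])

lemma nn_gg: "(\<integral>\<^sup>+i. ennreal (gg i) \<partial>count_space UNIV) = ennreal GG"
  by (simp add: nn_integral_count_space_nat gg_sum(3))

definition cc :: ennreal where "cc = (\<integral>\<^sup>+v. ennreal (pth v) \<partial>count_space UNIV)"

definition SS :: "nat \<Rightarrow> ennreal" where
  "SS n = (\<integral>\<^sup>+v. ennreal (pth v) * indicator {v. length v < n} v \<partial>count_space UNIV)"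

lemma SS_Suc: "SS (Suc n) = 1 + ennreal GG * SS n"
proof -
  have "SS (Suc n) = 1 + (\<integral>\<^sup>+i. \<integral>\<^sup>+u. ennreal (gg i) * (ennreal (pth u) * indicator {v. length v < n} u) \<partial>count_space UNIV \<partial>count_space UNIV)"
    unfolding SS_def
    by (subst nn_split) (simp add: pth_Cons ennreal_mult' gg_nonneg mult.assoc indicator_def)
  also have "\<dots> = 1 + (\<integral>\<^sup>+i. ennreal (gg i) * SS n \<partial>count_space UNIV)"
    by (simp add: nn_integral_cmult SS_def)
  also have "\<dots> = 1 + ennreal GG * SS n"
    by (simp add: nn_integral_multc nn_gg)
  finally show ?thesis .
qed

lemma SS_bound: "SS n \<le> ennreal (1 / (1 - GG))"
proof (induction n)
  case 0 then show ?case by (simp add: SS_def)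
next
  case (Suc n)
  have "SS (Suc n) \<le> 1 + ennreal GG * ennreal (1 / (1 - GG))"
    unfolding SS_Suc by (intro add_mono mult_left_mono Suc) auto
  also have "\<dots> = ennreal (1 + GG * (1 / (1 - GG)))"
  proof -
    have "ennreal GG * ennreal (1 / (1 - GG)) = ennreal (GG * (1 / (1 - GG)))"
      by (rule ennreal_mult''[symmetric]) (use gg_sum(2) in simp)
    moreover have "0 \<le> GG * (1 / (1 - GG))" using GG_nonneg gg_sum(2) by simp
    ultimately show ?thesis using ennreal_plus[OF zero_le_one, of "GG * (1 / (1 - GG))"] by simp
  qed
  also have "1 + GG * (1 / (1 - GG)) = 1 / (1 - GG)"
    using gg_sum(2) by (simp add: field_simps)
  finally show ?case .
qed

lemma cc_SUP: "cc = (SUP n. SS n)"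
proof -
  have "cc = (\<integral>\<^sup>+v. (SUP n. ennreal (pth v) * indicator {v. length v < n} v) \<partial>count_space UNIV)"
    unfolding cc_def
  proof (intro nn_integral_cong antisym)
    fix v
    show "(SUP n. ennreal (pth v) * indicator {v. length v < n} v) \<le> ennreal (pth v)"
      by (intro SUP_least) (auto simp: indicator_def)
    show "ennreal (pth v) \<le> (SUP n. ennreal (pth v) * indicator {v. length v < n} v)"
      by (rule SUP_upper2[of "Suc (length v)"]) auto
  qed
  also have "\<dots> = (SUP n. SS n)"
    unfolding SS_def
    by (intro nn_integral_monotone_convergence_SUP)
       (auto simp: incseq_def le_fun_def indicator_def intro!: mult_left_mono)
  finally show ?thesis .
qed

lemma cc_le: "cc \<le> ennreal (1 / (1 - GG))"
  unfolding cc_SUP by (intro SUP_least SS_bound)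

lemma cc_split: "cc = 1 + ennreal GG * cc"
proof -
  have "cc = 1 + (\<integral>\<^sup>+i. \<integral>\<^sup>+u. ennreal (gg i) * ennreal (pth u) \<partial>count_space UNIV \<partial>count_space UNIV)"
    unfolding cc_def by (subst nn_split) (simp add: pth_Cons ennreal_mult' gg_nonneg)
  also have "\<dots> = 1 + ennreal GG * cc"
    by (simp add: nn_integral_cmult nn_integral_multc nn_gg cc_def)
  finally show ?thesis .
qed

definition cR :: real where "cR = enn2real cc"

lemma cc_eq: "cc = ennreal cR"
proof -
  have "cc \<noteq> top" by (rule neq_top_trans[OF ennreal_neq_top cc_le])
  then show ?thesis unfolding cR_def by (simp add: ennreal_enn2real less_top)
qed

lemma cR_nonneg: "0 \<le> cR" by (simp add: cR_def)

lemma cR_ge1: "1 \<le> cR"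
proof -
  have "1 \<le> cc" using cc_split by (metis le_iff_add)
  then have "ennreal 1 \<le> ennreal cR" unfolding cc_eq by simp
  then show ?thesis by (subst (asm) ennreal_le_iff2) auto
qed

lemma tail_pth:
  assumes e: "0 < e"
  shows "\<exists>F. finite F \<and> (\<integral>\<^sup>+v. ennreal (pth v) * indicator (- F) v \<partial>count_space UNIV) < ennreal e"
proof -
  define FF where "FF n = {v::nat list. set v \<subseteq> {..<n} \<and> length v \<le> n}" for n
  have finFF: "finite (FF n)" for n
    unfolding FF_def by (rule finite_lists_length_le) simp
  have mono: "FF n \<subseteq> FF m" if "n \<le> m" for n m
    using that by (auto simp: FF_def)
  have inFF: "\<exists>n. v \<in> FF n" for v
  proof -
    define n where "n = max (length v) (Suc (Max (insert 0 (set v))))"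
    have "\<forall>x\<in>set v. x < n"
    proof
      fix x assume "x \<in> set v"
      then have "x \<le> Max (insert 0 (set v))" by (intro Max_ge) auto
      then show "x < n" unfolding n_def by linarith
    qed
    then show ?thesis by (intro exI[of _ n]) (auto simp: FF_def n_def)
  qed
  define I where "I n = (\<integral>\<^sup>+v. ennreal (pth v) * indicator (FF n) v \<partial>count_space UNIV)" for n
  have "cc = (\<integral>\<^sup>+v. (SUP n. ennreal (pth v) * indicator (FF n) v) \<partial>count_space UNIV)"
    unfolding cc_def
  proof (intro nn_integral_cong antisym)
    fix v
    show "(SUP n. ennreal (pth v) * indicator (FF n) v) \<le> ennreal (pth v)"
      by (intro SUP_least) (auto simp: indicator_def)
    obtain n where "v \<in> FF n" using inFF by blast
    then show "ennreal (pth v) \<le> (SUP n. ennreal (pth v) * indicator (FF n) v)"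
      by (intro SUP_upper2[of n]) auto
  qed
  also have "\<dots> = (SUP n. I n)"
    unfolding I_def using mono
    by (intro nn_integral_monotone_convergence_SUP)
       (auto simp: incseq_def le_fun_def indicator_def intro!: mult_left_mono)
  finally have cI: "cc = (SUP n. I n)" .
  have "ennreal (cR - e) < cc"
    using e cR_ge1 unfolding cc_eq by (intro ennreal_lessI) auto
  then obtain n where n: "ennreal (cR - e) < I n" unfolding cI less_SUP_iff by auto
  have split: "(\<integral>\<^sup>+v. ennreal (pth v) * indicator (- FF n) v \<partial>count_space UNIV) + I n = cc"
  proof -
    have "(\<integral>\<^sup>+v. ennreal (pth v) * indicator (- FF n) v \<partial>count_space UNIV) + I n
        = (\<integral>\<^sup>+v. ennreal (pth v) * indicator (- FF n) v + ennreal (pth v) * indicator (FF n) v \<partial>count_space UNIV)"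
      unfolding I_def by (rule nn_integral_add[symmetric]) auto
    also have "\<dots> = cc" unfolding cc_def by (intro nn_integral_cong) (auto simp: indicator_def)
    finally show ?thesis .
  qed
  have "I n \<le> cc" using split by (metis le_iff_add add.commute)
  then have "I n \<noteq> top" unfolding cc_eq by (rule neq_top_trans[OF ennreal_neq_top])
  then obtain iR where iR: "I n = ennreal iR" "0 \<le> iR"
    by (intro that[of "enn2real (I n)"]) (auto simp: ennreal_enn2real less_top)
  have "(\<integral>\<^sup>+v. ennreal (pth v) * indicator (- FF n) v \<partial>count_space UNIV) \<le> cc" using split by (metis le_iff_add)
  then have "(\<integral>\<^sup>+v. ennreal (pth v) * indicator (- FF n) v \<partial>count_space UNIV) \<noteq> top" unfolding cc_eq by (rule neq_top_trans[OF ennreal_neq_top])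
  then obtain aR where aR: "(\<integral>\<^sup>+v. ennreal (pth v) * indicator (- FF n) v \<partial>count_space UNIV) = ennreal aR" "0 \<le> aR"
    by (intro that[of "enn2real (\<integral>\<^sup>+v. ennreal (pth v) * indicator (- FF n) v \<partial>count_space UNIV)"]) (auto simp: ennreal_enn2real less_top)
  have "aR + iR = cR" using split aR iR cR_ge1 unfolding cc_eq by (simp add: ennreal_plus[symmetric] del: ennreal_plus)
  moreover have "cR - e < iR" using n iR by (cases "0 \<le> cR - e") (auto simp: ennreal_less_iff)
  ultimately have "aR < e" by simp
  then show ?thesis using finFF aR by (intro exI[of _ "FF n"]) (auto simp: ennreal_less_iff)
qed

end

lemma pre_desc: "j \<in> pre w \<Longrightarrow> w = j @ (w ! length j) # drop (Suc (length j)) w"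
proof -
  assume "j \<in> pre w"
  then have a: "length j < length w" "take (length j) w = j" unfolding in_pre_iff by auto
  then have b: "drop (length j) w = w ! length j # drop (Suc (length j)) w"
    by (simp add: Cons_nth_drop_Suc)
  show ?thesis using a(2) b by (metis append_take_drop_id)
qed

lemma union_bound:
  assumes "countable I" "\<And>i. i \<in> I \<Longrightarrow> X i \<in> sets M"
  shows "emeasure M (\<Union>i\<in>I. X i) \<le> (\<integral>\<^sup>+i. emeasure M (X i) \<partial>count_space I)"
proof -
  have [measurable]: "(\<Union>i\<in>I. X i) \<in> sets M" using assms by (intro sets.countable_UN'') auto
  have "emeasure M (\<Union>i\<in>I. X i) = (\<integral>\<^sup>+x. indicator (\<Union>i\<in>I. X i) x \<partial>M)" by simp
  also have "\<dots> \<le> (\<integral>\<^sup>+x. \<integral>\<^sup>+i. indicator (X i) x \<partial>count_space I \<partial>M)"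
  proof (intro nn_integral_mono)
    fix x
    show "indicator (\<Union>i\<in>I. X i) x \<le> (\<integral>\<^sup>+i. indicator (X i) x \<partial>count_space I)"
    proof (cases "x \<in> (\<Union>i\<in>I. X i)")
      case True
      then obtain i0 where i0: "i0 \<in> I" "x \<in> X i0" by auto
      have "(1::ennreal) = (\<integral>\<^sup>+i. indicator (X i) x * indicator {i0} i \<partial>count_space I)"
        using i0 by (subst nn_integral_indicator_singleton) auto
      also have "\<dots> \<le> (\<integral>\<^sup>+i. indicator (X i) x \<partial>count_space I)"
        by (intro nn_integral_mono) (auto simp: indicator_def)
      finally show ?thesis using True by simp
    qed simp
  qed
  also have "\<dots> = (\<integral>\<^sup>+i. \<integral>\<^sup>+x. indicator (X i) x \<partial>M \<partial>count_space I)"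
    using assms by (intro nn_integral_count_space_nn_integral) auto
  also have "\<dots> = (\<integral>\<^sup>+i. emeasure M (X i) \<partial>count_space I)"
    using assms by (intro nn_integral_cong_simp) auto
  finally show ?thesis .
qed

context hawkes
begin

interpretation Qp: prob_space Q by (rule Q_prob)

lemma prod_sets:
  assumes J: "finite J" and B: "\<And>j. j \<in> J \<Longrightarrow> B j \<in> sets (Q \<Otimes>\<^sub>M count_space UNIV)"
  shows "{\<omega>\<in>space M. \<forall>j\<in>J. (A j \<omega>, N j \<omega>) \<in> B j} \<in> sets M"
proof -
  have "{\<omega>\<in>space M. (A j \<omega>, N j \<omega>) \<in> B j} \<in> sets M" if j: "j \<in> J" for j
  proof -
    have "{\<omega>\<in>space M. (A j \<omega>, N j \<omega>) \<in> B j} = (\<lambda>\<omega>. (A j \<omega>, N j \<omega>)) -` B j \<inter> space M" by auto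
    then show ?thesis using measurable_sets[OF rv B[OF j]] by simp
  qed
  then show ?thesis using J by (intro sets.sets_Collect_finite_All) auto
qed

lemma pair_a:
  assumes vw: "v \<noteq> w" "w \<notin> desc v"
  shows "emeasure M (EE t v \<inter> EE t w) \<le> ennreal (TT t * TT t * pth w)"
proof -
  have vnot: "v \<notin> insert w (pre w)"
    using vw pre_desc[of v w] by (auto simp: desc_def)
  define B where "B j = (if j = v \<or> j = w then {a\<in>space Q. t < f a} \<times> UNIV else space Q \<times> {n. w ! length j < n})" for j
  have Bs: "B j \<in> sets (Q \<Otimes>\<^sub>M count_space UNIV)" for j
    unfolding B_def by auto
  have sub: "EE t v \<inter> EE t w \<subseteq> {\<omega>\<in>space M. \<forall>j\<in>insert v (insert w (pre w)). (A j \<omega>, N j \<omega>) \<in> B j}"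
    using not_in_pre[of w] vnot
    by (auto simp: EE_def B_def incl_pre measurable_space[OF A_meas] split: if_splits)
  have "emeasure M (EE t v \<inter> EE t w) \<le> emeasure M {\<omega>\<in>space M. \<forall>j\<in>insert v (insert w (pre w)). (A j \<omega>, N j \<omega>) \<in> B j}"
    by (rule emeasure_mono[OF sub prod_sets]) (auto simp: Bs)
  also have "\<dots> = (\<Prod>j\<in>insert v (insert w (pre w)). emeasure M {\<omega>\<in>space M. (A j \<omega>, N j \<omega>) \<in> B j})"
    by (rule prodF) (auto simp: Bs)
  also have "\<dots> = ennreal (TT t) * (ennreal (TT t) * (\<Prod>j\<in>pre w. emeasure M {\<omega>\<in>space M. (A j \<omega>, N j \<omega>) \<in> B j}))"
    using vnot not_in_pre[of w] by (simp add: B_def ev_T')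
  also have "(\<Prod>j\<in>pre w. emeasure M {\<omega>\<in>space M. (A j \<omega>, N j \<omega>) \<in> B j}) = (\<Prod>j\<in>pre w. ennreal (gg (w ! length j)))"
    using vnot not_in_pre[of w] by (intro prod.cong refl) (auto simp: B_def ev_g')
  also have "\<dots> = ennreal (pth w)"
    by (simp add: prod_pre pth_def prod_ennreal gg_nonneg min_def)
  finally show ?thesis
    by (simp add: ennreal_mult' TT_nonneg pth_nonneg mult.assoc)
qed

lemma pair_b:
  shows "emeasure M (EE t v \<inter> EE t (v @ i # u)) \<le> ennreal (mm t i * TT t * pth u)"
proof -
  define w where "w = v @ i # u"
  define P where "P = (\<lambda>k. v @ i # take k u) ` {..<length u}"
  have injP: "inj_on (\<lambda>k. v @ i # take k u) {..<length u}"
    using inj_take[of u] by (auto simp: inj_on_def)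
  have vP: "v \<notin> P" "w \<notin> P" "v \<noteq> w"
  proof -
    show "v \<notin> P" by (auto simp: P_def)
    show "w \<notin> P"
    proof
      assume "w \<in> P"
      then obtain k where k: "k < length u" "w = v @ i # take k u" by (auto simp: P_def)
      then have "length w = length v + Suc k" by simp
      moreover have "length w = length v + Suc (length u)" by (simp add: w_def)
      ultimately show False using k(1) by simp
    qed
    show "v \<noteq> w" by (simp add: w_def)
  qed
  define B where "B j = (if j = v then {a\<in>space Q. t < f a} \<times> {n. i < n} else if j = w then {a\<in>space Q. t < f a} \<times> UNIV
     else space Q \<times> {n. u ! (length j - Suc (length v)) < n})" for j
  have Bs: "B j \<in> sets (Q \<Otimes>\<^sub>M count_space UNIV)" for j
    unfolding B_def by auto
  have vpre: "v \<in> pre w" unfolding in_pre_iff w_def by simp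
  have Ppre: "j \<in> pre w" if jP: "j \<in> P" for j
  proof -
    obtain k where k: "k < length u" "j = v @ i # take k u" using jP by (auto simp: P_def)
    have "take (length v + Suc k) (v @ i # u) = v @ i # take k u" by simp
    then show ?thesis using k unfolding in_pre_iff w_def by (simp add: min_def)
  qed
  have sub: "EE t v \<inter> EE t w \<subseteq> {\<omega>\<in>space M. \<forall>j\<in>insert v (insert w P). (A j \<omega>, N j \<omega>) \<in> B j}"
  proof (rule subsetI)
    fix \<omega> assume "\<omega> \<in> EE t v \<inter> EE t w"
    then have sp: "\<omega> \<in> space M" and Ev: "t < f (A v \<omega>)" and Ew: "t < f (A w \<omega>)"
      and clw: "in_cluster (\<lambda>u. N u \<omega>) w"
      unfolding EE_def by auto
    have cl: "\<forall>j\<in>pre w. w ! length j < N j \<omega>" using clw by (simp only: incl_pre)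
    have "(A j \<omega>, N j \<omega>) \<in> B j" if j: "j \<in> insert v (insert w P)" for j
    proof -
      have Aj: "A j \<omega> \<in> space Q" using sp by (rule measurable_space[OF A_meas])
      consider "j = v" | "j = w" | "j \<in> P" "j \<noteq> v" "j \<noteq> w" using j by auto
      then show ?thesis
      proof cases
        case 1
        have "w ! length v < N v \<omega>" using cl vpre by blast
        moreover have "w ! length v = i" by (simp add: w_def)
        ultimately show ?thesis using 1 Ev Aj by (simp add: B_def)
      next
        case 2
        then show ?thesis using Ew Aj vP by (simp add: B_def)
      next
        case 3
        then obtain k where k: "k < length u" "j = v @ i # take k u" by (auto simp: P_def)
        have "w ! length j < N j \<omega>" using cl Ppre[OF 3(1)] by blast
        moreover have "w ! length j = u ! (length j - Suc (length v))"
          using k by (simp add: w_def nth_append)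
        ultimately show ?thesis using 3 Aj by (simp add: B_def)
      qed
    qed
    then show "\<omega> \<in> {\<omega>\<in>space M. \<forall>j\<in>insert v (insert w P). (A j \<omega>, N j \<omega>) \<in> B j}"
      using sp by blast
  qed
  have "emeasure M (EE t v \<inter> EE t w) \<le> emeasure M {\<omega>\<in>space M. \<forall>j\<in>insert v (insert w P). (A j \<omega>, N j \<omega>) \<in> B j}"
    by (rule emeasure_mono[OF sub prod_sets]) (auto simp: Bs P_def)
  also have "\<dots> = (\<Prod>j\<in>insert v (insert w P). emeasure M {\<omega>\<in>space M. (A j \<omega>, N j \<omega>) \<in> B j})"
    by (rule prodF) (auto simp: Bs P_def)
  also have "\<dots> = emeasure M {\<omega>\<in>space M. (A v \<omega>, N v \<omega>) \<in> B v} * (emeasure M {\<omega>\<in>space M. (A w \<omega>, N w \<omega>) \<in> B w} * (\<Prod>j\<in>P. emeasure M {\<omega>\<in>space M. (A j \<omega>, N j \<omega>) \<in> B j}))"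
    using vP by (simp add: P_def)
  also have "emeasure M {\<omega>\<in>space M. (A v \<omega>, N v \<omega>) \<in> B v} = ennreal (mm t i)"
    unfolding B_def using ev_m[of v t i] by simp
  also have "emeasure M {\<omega>\<in>space M. (A w \<omega>, N w \<omega>) \<in> B w} = ennreal (TT t)"
    unfolding B_def using vP ev_T[of w t] by simp
  also have "(\<Prod>j\<in>P. emeasure M {\<omega>\<in>space M. (A j \<omega>, N j \<omega>) \<in> B j}) = (\<Prod>j\<in>P. ennreal (gg (u ! (length j - Suc (length v)))))"
  proof (intro prod.cong refl)
    fix j assume "j \<in> P"
    then have "j \<noteq> v" "j \<noteq> w" using vP by auto
    then have "B j = space Q \<times> {n. u ! (length j - Suc (length v)) < n}" by (simp add: B_def)
    then show "emeasure M {\<omega>\<in>space M. (A j \<omega>, N j \<omega>) \<in> B j} = ennreal (gg (u ! (length j - Suc (length v))))"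
      using ev_g[of j] by simp
  qed
  also have "\<dots> = (\<Prod>k\<in>{..<length u}. ennreal (gg (u ! (length (v @ i # take k u) - Suc (length v)))))"
    unfolding P_def by (rule prod.reindex[OF injP, unfolded comp_def])
  also have "\<dots> = (\<Prod>k<length u. ennreal (gg (u ! k)))"
    by (intro prod.cong refl) simp
  also have "\<dots> = ennreal (pth u)"
    by (simp add: pth_def prod_ennreal gg_nonneg)
  finally show ?thesis
    unfolding w_def by (simp add: ennreal_mult' TT_nonneg pth_nonneg mm_nonneg mult.assoc)
qed

definition MM :: "real \<Rightarrow> real" where "MM t = (\<Sum>i. mm t i)"

lemma mm_summable: "summable (mm t)"
  by (rule summable_comparison_test'[OF gg_sum(1), of 0]) (auto simp: mm_nonneg mm_le_g)

lemma MM_nonneg: "0 \<le> MM t"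
  unfolding MM_def by (rule suminf_nonneg[OF mm_summable mm_nonneg])

lemma nn_mm: "(\<integral>\<^sup>+i. ennreal (mm t i) \<partial>count_space UNIV) = ennreal (MM t)"
  by (simp add: nn_integral_count_space_nat MM_def suminf_ennreal2 mm_nonneg mm_summable)

lemma MM_bound: "MM t \<le> real K * TT t + (GG - (\<Sum>i<K. gg i))"
proof -
  have "MM t = (\<Sum>n. mm t (n + K)) + (\<Sum>i<K. mm t i)"
    unfolding MM_def by (rule suminf_split_initial_segment[OF mm_summable])
  also have "(\<Sum>n. mm t (n + K)) \<le> (\<Sum>n. gg (n + K))"
    by (intro suminf_le mm_le_g summable_ignore_initial_segment mm_summable gg_sum(1))
  also have "(\<Sum>n. gg (n + K)) = GG - (\<Sum>i<K. gg i)"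
    unfolding GG_def using suminf_split_initial_segment[OF gg_sum(1), of K] by simp
  also have "(\<Sum>i<K. mm t i) \<le> (\<Sum>i<K. TT t)"
    by (intro sum_mono mm_le_T)
  finally show ?thesis by simp
qed

lemma pair_sum:
  "(\<integral>\<^sup>+w. emeasure M (EE t v \<inter> EE t w) \<partial>count_space (- {v})) \<le> ennreal (cR * TT t * (TT t + MM t))"
proof -
  define F where "F w = ennreal (mm t (w ! length v) * TT t * pth (drop (Suc (length v)) w))" for w
  have pt: "emeasure M (EE t v \<inter> EE t w) * indicator (- {v}) w \<le> ennreal (TT t * TT t * pth w) + F w * indicator (desc v) w" for w
  proof (cases "w = v")
    case True then show ?thesis by simp
  next
    case False
    show ?thesis
    proof (cases "w \<in> desc v")
      case True
      then obtain i u where w: "w = v @ i # u" by (auto simp: desc_def)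
      have "emeasure M (EE t v \<inter> EE t w) \<le> F w"
        using pair_b[of t v i u] unfolding w F_def by (simp add: nth_append)
      then have "emeasure M (EE t v \<inter> EE t w) \<le> ennreal (TT t * TT t * pth w) + F w"
        by (rule order.trans) (rule add_increasing; simp)
      then show ?thesis using False True by (simp add: indicator_def)
    next
      case nd: False
      show ?thesis using pair_a[OF _ nd, of t] False nd by (auto simp: indicator_def)
    qed
  qed
  have "(\<integral>\<^sup>+w. emeasure M (EE t v \<inter> EE t w) \<partial>count_space (- {v}))
     = (\<integral>\<^sup>+w. emeasure M (EE t v \<inter> EE t w) * indicator (- {v}) w \<partial>count_space UNIV)"
    by (simp add: nn_integral_count_space_indicator)
  also have "\<dots> \<le> (\<integral>\<^sup>+w. ennreal (TT t * TT t * pth w) + F w * indicator (desc v) w \<partial>count_space UNIV)"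
    by (intro nn_integral_mono pt)
  also have "\<dots> = (\<integral>\<^sup>+w. ennreal (TT t * TT t) * ennreal (pth w) \<partial>count_space UNIV) + (\<integral>\<^sup>+w. F w * indicator (desc v) w \<partial>count_space UNIV)"
    by (subst nn_integral_add) (auto simp: ennreal_mult' TT_nonneg)
  also have "(\<integral>\<^sup>+w. ennreal (TT t * TT t) * ennreal (pth w) \<partial>count_space UNIV) = ennreal (TT t * TT t) * cc"
    by (simp add: nn_integral_cmult cc_def)
  also have "(\<integral>\<^sup>+w. F w * indicator (desc v) w \<partial>count_space UNIV) = (\<integral>\<^sup>+i. \<integral>\<^sup>+u. ennreal (mm t i * TT t) * ennreal (pth u) \<partial>count_space UNIV \<partial>count_space UNIV)"
    by (subst nn_desc) (simp add: F_def nth_append ennreal_mult' mm_nonneg TT_nonneg)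
  also have "\<dots> = (\<integral>\<^sup>+i. ennreal (mm t i) * (ennreal (TT t) * cc) \<partial>count_space UNIV)"
    by (simp add: nn_integral_cmult cc_def ennreal_mult' mm_nonneg TT_nonneg mult.assoc)
  also have "\<dots> = ennreal (MM t) * (ennreal (TT t) * cc)"
    by (simp add: nn_integral_multc nn_mm)
  also have "ennreal (TT t * TT t) * cc + ennreal (MM t) * (ennreal (TT t) * cc) = ennreal (cR * TT t * (TT t + MM t))"
    unfolding cc_eq using TT_nonneg MM_nonneg cR_nonneg
    by (simp add: ennreal_mult'[symmetric] ennreal_plus[symmetric] algebra_simps del: ennreal_plus)
  finally show ?thesis .
qed

end

lemma Sup_unbdd:
  assumes "\<not> bdd_above (S::real set)"
  shows "Sup S = Sup (UNIV::real set)"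
proof -
  have "(\<lambda>z. \<forall>x\<in>S. x \<le> z) = (\<lambda>z::real. \<forall>x\<in>UNIV. x \<le> z)"
  proof (rule ext)
    fix z :: real
    have "\<not> (\<forall>x\<in>S. x \<le> z)" using assms by (auto simp: bdd_above_def)
    moreover have "\<not> (\<forall>x\<in>UNIV. x \<le> z)" by (auto intro: exI[of _ "z + 1"])
    ultimately show "(\<forall>x\<in>S. x \<le> z) = (\<forall>x\<in>UNIV. x \<le> z)" by blast
  qed
  then show ?thesis unfolding Sup_real_def by simp
qed

context hawkes
begin

interpretation Qp: prob_space Q by (rule Q_prob)

lemma P_cl: "emeasure M {\<omega>\<in>space M. in_cluster (\<lambda>u. N u \<omega>) v} = ennreal (pth v)"
proof -
  define B where "B (j::nat list) = space Q \<times> {n. v ! length j < n}" for j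
  have Bs: "B j \<in> sets (Q \<Otimes>\<^sub>M count_space UNIV)" for j
    unfolding B_def by auto
  have eq: "{\<omega>\<in>space M. in_cluster (\<lambda>u. N u \<omega>) v} = {\<omega>\<in>space M. \<forall>j\<in>pre v. (A j \<omega>, N j \<omega>) \<in> B j}"
    by (auto simp: B_def incl_pre measurable_space[OF A_meas])
  have "emeasure M {\<omega>\<in>space M. in_cluster (\<lambda>u. N u \<omega>) v} = (\<Prod>j\<in>pre v. emeasure M {\<omega>\<in>space M. (A j \<omega>, N j \<omega>) \<in> B j})"
    unfolding eq by (rule prodF) (auto simp: Bs)
  also have "\<dots> = (\<Prod>j\<in>pre v. ennreal (gg (v ! length j)))"
    by (intro prod.cong refl) (simp add: B_def ev_g')
  also have "\<dots> = ennreal (pth v)"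
    by (simp add: prod_pre pth_def prod_ennreal gg_nonneg min_def)
  finally show ?thesis .
qed

definition cnt :: "'w \<Rightarrow> ennreal" where
  "cnt \<omega> = (\<integral>\<^sup>+v. indicator {\<omega>\<in>space M. in_cluster (\<lambda>u. N u \<omega>) v} \<omega> \<partial>count_space UNIV)"

lemma cnt_meas: "cnt \<in> borel_measurable M"
proof -
  have "(\<lambda>(x, y). indicator {\<omega>\<in>space M. in_cluster (\<lambda>u. N u \<omega>) y} x :: ennreal) \<in> borel_measurable (M \<Otimes>\<^sub>M count_space UNIV)"
    unfolding measurable_pair_swap_iff[of _ M]
    by (rule measurable_pair_measure_countable1) (auto intro!: borel_measurable_indicator)
  then show ?thesis unfolding cnt_def
    by (intro sigma_finite_measure.borel_measurable_nn_integral sigma_finite_measure_count_space_countable) auto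
qed

lemma AE_fin: "AE \<omega> in M. finite {v. in_cluster (\<lambda>u. N u \<omega>) v}"
proof -
  have "(\<integral>\<^sup>+\<omega>. cnt \<omega> \<partial>M) = (\<integral>\<^sup>+v. \<integral>\<^sup>+\<omega>. indicator {\<omega>\<in>space M. in_cluster (\<lambda>u. N u \<omega>) v} \<omega> \<partial>M \<partial>count_space UNIV)"
    unfolding cnt_def by (rule nn_integral_count_space_nn_integral) auto
  also have "\<dots> = cc"
    unfolding cc_def by (intro nn_integral_cong) (simp add: P_cl)
  finally have "(\<integral>\<^sup>+\<omega>. cnt \<omega> \<partial>M) \<noteq> \<infinity>" by (simp add: cc_eq)
  from nn_integral_PInf_AE[OF cnt_meas this]
  show ?thesis
  proof (rule AE_mp, intro AE_I2 impI)
    fix \<omega> assume \<omega>: "\<omega> \<in> space M" and c: "cnt \<omega> \<noteq> \<infinity>"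
    have "cnt \<omega> = (\<integral>\<^sup>+v. indicator {v. in_cluster (\<lambda>u. N u \<omega>) v} v \<partial>count_space UNIV)"
      unfolding cnt_def using \<omega> by (intro nn_integral_cong) (auto simp: indicator_def)
    also have "\<dots> = emeasure (count_space UNIV) {v. in_cluster (\<lambda>u. N u \<omega>) v}"
      by simp
    finally show "finite {v. in_cluster (\<lambda>u. N u \<omega>) v}"
      using c by (cases "finite {v. in_cluster (\<lambda>u. N u \<omega>) v}") auto
  qed
qed

definition Hs :: "real \<Rightarrow> 'w set" where
  "Hs t = {\<omega>\<in>space M. t < cluster_max f (\<lambda>v. A v \<omega>) (\<lambda>v. N v \<omega>)}"

definition UU :: "real \<Rightarrow> 'w set" where
  "UU t = {\<omega>\<in>space M. \<exists>v. in_cluster (\<lambda>u. N u \<omega>) v \<and> t < f (A v \<omega>)}"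

lemma UU_sets[measurable]: "UU t \<in> sets M"
  unfolding UU_def by measurable

lemma UU_eq: "UU t = (\<Union>v. EE t v)"
  by (auto simp: UU_def EE_def)

definition Bd :: "'w \<Rightarrow> bool" where
  "Bd \<omega> \<longleftrightarrow> (\<exists>m::nat. \<forall>v. in_cluster (\<lambda>u. N u \<omega>) v \<longrightarrow> f (A v \<omega>) \<le> real m)"

lemma Bd_pred[measurable]: "Measurable.pred M Bd"
  unfolding Bd_def by measurable

lemma Hs_eq: "Hs t = {\<omega>\<in>space M. (Bd \<omega> \<and> (\<exists>v. in_cluster (\<lambda>u. N u \<omega>) v \<and> t < f (A v \<omega>))) \<or> (\<not> Bd \<omega> \<and> t < Sup (UNIV::real set))}"
proof -
  have *: "t < cluster_max f (\<lambda>v. A v \<omega>) (\<lambda>v. N v \<omega>) \<longleftrightarrow>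
      (Bd \<omega> \<and> (\<exists>v. in_cluster (\<lambda>u. N u \<omega>) v \<and> t < f (A v \<omega>))) \<or> (\<not> Bd \<omega> \<and> t < Sup (UNIV::real set))" for \<omega>
  proof -
    define S where "S = {f (A v \<omega>) |v. in_cluster (\<lambda>u. N u \<omega>) v}"
    have ne: "S \<noteq> {}" unfolding S_def using in_cluster.root by blast
    have bd: "bdd_above S \<longleftrightarrow> Bd \<omega>"
    proof
      assume "bdd_above S"
      then obtain M0 where "\<forall>x\<in>S. x \<le> M0" by (auto simp: bdd_above_def)
      then have "\<forall>v. in_cluster (\<lambda>u. N u \<omega>) v \<longrightarrow> f (A v \<omega>) \<le> real (nat \<lceil>M0\<rceil>)"
        unfolding S_def using real_nat_ceiling_ge[of M0] by (auto intro: order.trans)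
      then show "Bd \<omega>" unfolding Bd_def by blast
    next
      assume "Bd \<omega>"
      then obtain m :: nat where "\<forall>v. in_cluster (\<lambda>u. N u \<omega>) v \<longrightarrow> f (A v \<omega>) \<le> real m"
        unfolding Bd_def by blast
      then show "bdd_above S" unfolding S_def by (intro bdd_aboveI[of _ "real m"]) auto
    qed
    have cm: "cluster_max f (\<lambda>v. A v \<omega>) (\<lambda>v. N v \<omega>) = Sup S"
      unfolding cluster_max_def S_def by simp
    show ?thesis
    proof (cases "Bd \<omega>")
      case True
      then have "t < Sup S \<longleftrightarrow> (\<exists>x\<in>S. t < x)" using bd ne by (intro less_cSup_iff) auto
      then show ?thesis using True unfolding cm by (auto simp: S_def)
    next
      case False
      then show ?thesis using bd Sup_unbdd[of S] unfolding cm by auto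
    qed
  qed
  show ?thesis unfolding Hs_def using * by blast
qed

lemma Hs_sets[measurable]: "Hs t \<in> sets M"
  unfolding Hs_eq by measurable

lemma Hs_UU: "emeasure M (Hs t) = emeasure M (UU t)"
proof (rule emeasure_eq_AE)
  show "AE x in M. (x \<in> Hs t) = (x \<in> UU t)"
    using AE_fin
  proof (rule AE_mp, intro AE_I2 impI)
    fix \<omega> assume \<omega>: "\<omega> \<in> space M" and fin: "finite {v. in_cluster (\<lambda>u. N u \<omega>) v}"
    define S where "S = {f (A v \<omega>) |v. in_cluster (\<lambda>u. N u \<omega>) v}"
    have "S = (\<lambda>v. f (A v \<omega>)) ` {v. in_cluster (\<lambda>u. N u \<omega>) v}" unfolding S_def by auto
    then have "finite S" using fin by simp
    then have "bdd_above S" by (rule bdd_above_finite)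
    then have "Bd \<omega>"
    proof -
      assume "bdd_above S"
      then obtain M0 where "\<forall>x\<in>S. x \<le> M0" by (auto simp: bdd_above_def)
      then have "\<forall>v. in_cluster (\<lambda>u. N u \<omega>) v \<longrightarrow> f (A v \<omega>) \<le> real (nat \<lceil>M0\<rceil>)"
        unfolding S_def using real_nat_ceiling_ge[of M0] by (auto intro: order.trans)
      then show "Bd \<omega>" unfolding Bd_def by blast
    qed
    then show "(\<omega> \<in> Hs t) = (\<omega> \<in> UU t)" using \<omega> unfolding Hs_eq UU_def by auto
  qed
qed auto


lemma upper_e: "emeasure M (Hs t) \<le> ennreal (cR * TT t)"
proof -
  have "emeasure M (Hs t) = emeasure M (\<Union>v\<in>UNIV. EE t v)" by (simp add: Hs_UU UU_eq)
  also have "\<dots> \<le> (\<integral>\<^sup>+v. emeasure M (EE t v) \<partial>count_space UNIV)"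
    by (rule union_bound) auto
  also have "\<dots> = (\<integral>\<^sup>+v. ennreal (pth v) * ennreal (TT t) \<partial>count_space UNIV)"
    by (simp add: P_EE ennreal_mult' pth_nonneg)
  also have "\<dots> = ennreal (cR * TT t)"
    by (simp add: nn_integral_multc cc_def[symmetric] cc_eq ennreal_mult' cR_nonneg)
  finally show ?thesis .
qed

lemma upper: "measure M (Hs t) \<le> cR * TT t"
  using upper_e[of t] cR_nonneg TT_nonneg by (simp add: emeasure_eq_measure)

definition tailF :: "nat list set \<Rightarrow> ennreal" where
  "tailF F = (\<integral>\<^sup>+v. ennreal (pth v) * indicator (- F) v \<partial>count_space UNIV)"

lemma lower_e:
  assumes F: "finite F"
  shows "ennreal (cR * TT t) \<le> emeasure M (UU t) + ennreal (real (card F) * (cR * TT t * (TT t + MM t))) + ennreal (TT t) * tailF F"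
proof -
  define X where "X = cR * TT t * (TT t + MM t)"
  have X0: "0 \<le> X" unfolding X_def using cR_nonneg TT_nonneg MM_nonneg by simp
  define U where "U v = (\<Union>w\<in>- {v}. EE t w)" for v
  define D where "D v = EE t v - U v" for v
  have Us[measurable]: "U v \<in> sets M" for v unfolding U_def by (intro sets.countable_UN'') auto
  have Ds[measurable]: "D v \<in> sets M" for v unfolding D_def by auto
  have disj: "disjoint_family D"
    unfolding disjoint_family_on_def D_def U_def by auto
  have DU: "(\<Union>v. D v) \<subseteq> UU t" unfolding D_def UU_eq by auto
  have R: "emeasure M (EE t v) \<le> emeasure M (D v) + (ennreal X * indicator F v + ennreal (TT t) * (ennreal (pth v) * indicator (- F) v))" for v
  proof -
    define R where "R = (\<Union>w\<in>- {v}. EE t v \<inter> EE t w)"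
    have Rs: "R \<in> sets M" unfolding R_def by (intro sets.countable_UN'') auto
    have "EE t v \<subseteq> D v \<union> R" unfolding D_def U_def R_def by auto
    then have "emeasure M (EE t v) \<le> emeasure M (D v \<union> R)" by (intro emeasure_mono) (auto simp: Rs)
    also have "\<dots> \<le> emeasure M (D v) + emeasure M R" by (intro emeasure_subadditive) (auto simp: Rs)
    also have "emeasure M R \<le> ennreal X * indicator F v + ennreal (TT t) * (ennreal (pth v) * indicator (- F) v)"
    proof (cases "v \<in> F")
      case True
      have "emeasure M R \<le> (\<integral>\<^sup>+w. emeasure M (EE t v \<inter> EE t w) \<partial>count_space (- {v}))"
        unfolding R_def by (rule union_bound) auto
      also have "\<dots> \<le> ennreal X" unfolding X_def by (rule pair_sum)
      finally show ?thesis using True by simp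
    next
      case False
      have "emeasure M R \<le> emeasure M (EE t v)" unfolding R_def by (intro emeasure_mono) auto
      also have "\<dots> = ennreal (TT t) * ennreal (pth v)" by (simp add: P_EE ennreal_mult' TT_nonneg mult.commute)
      finally show ?thesis using False by simp
    qed
    finally show ?thesis by (simp add: add_left_mono)
  qed
  have "ennreal (cR * TT t) = (\<integral>\<^sup>+v. emeasure M (EE t v) \<partial>count_space UNIV)"
    by (simp add: P_EE ennreal_mult' pth_nonneg nn_integral_multc cc_def[symmetric] cc_eq cR_nonneg)
  also have "\<dots> \<le> (\<integral>\<^sup>+v. emeasure M (D v) + (ennreal X * indicator F v + ennreal (TT t) * (ennreal (pth v) * indicator (- F) v)) \<partial>count_space UNIV)"
    by (intro nn_integral_mono R)
  also have "\<dots> = (\<integral>\<^sup>+v. emeasure M (D v) \<partial>count_space UNIV) + ((\<integral>\<^sup>+v. ennreal X * indicator F v \<partial>count_space UNIV) + (\<integral>\<^sup>+v. ennreal (TT t) * (ennreal (pth v) * indicator (- F) v) \<partial>count_space UNIV))"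
    by (simp add: nn_integral_add)
  also have "(\<integral>\<^sup>+v. emeasure M (D v) \<partial>count_space UNIV) = emeasure M (\<Union>v. D v)"
    using emeasure_UN_countable[of UNIV D M] disj by simp
  also have "\<dots> \<le> emeasure M (UU t)" by (intro emeasure_mono DU) simp
  also have "(\<integral>\<^sup>+v. ennreal X * indicator F v \<partial>count_space UNIV) = ennreal (real (card F) * X)"
    using F X0 by (simp add: nn_integral_cmult_indicator ennreal_mult' mult.commute ennreal_of_nat_eq_real_of_nat)
  also have "(\<integral>\<^sup>+v. ennreal (TT t) * (ennreal (pth v) * indicator (- F) v) \<partial>count_space UNIV) = ennreal (TT t) * tailF F"
    unfolding tailF_def by (simp add: nn_integral_cmult)
  finally show ?thesis unfolding X_def by (simp add: add.assoc)
qed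

lemma lower:
  assumes e: "0 < e"
  shows "\<exists>\<delta>>0. \<forall>t. TT t < \<delta> \<longrightarrow> (cR - e) * TT t \<le> measure M (Hs t)"
proof -
  obtain F where F: "finite F" and tF: "tailF F < ennreal (e / 2)"
    using tail_pth[of "e / 2"] e unfolding tailF_def by auto
  define tR where "tR = enn2real (tailF F)"
  have tailF_eq: "tailF F = ennreal tR"
    using tF unfolding tR_def by (cases "tailF F") auto
  have tR0: "0 \<le> tR" unfolding tR_def by simp
  have "ennreal tR < ennreal (e / 2)" using tF tailF_eq by simp
  then have tRe: "tR < e / 2" using tR0 by (subst (asm) ennreal_less_iff) auto
  define nF where "nF = real (card F)"
  have nF0: "0 \<le> nF" unfolding nF_def by simp
  define a where "a = e / (4 * (nF + 1) * cR)"
  have a0: "0 < a" unfolding a_def using e nF0 cR_ge1 by simp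
  have "(\<lambda>n. \<Sum>i<n. gg i) \<longlonglongrightarrow> GG" unfolding GG_def by (rule summable_LIMSEQ[OF gg_sum(1)])
  then have "eventually (\<lambda>n. GG - a < (\<Sum>i<n. gg i)) sequentially"
    using a0 by (intro order_tendstoD(1)) auto
  then obtain K where "\<forall>n\<ge>K. GG - a < (\<Sum>i<n. gg i)" by (auto simp: eventually_sequentially)
  then have K: "GG - (\<Sum>i<K. gg i) < a" by auto
  define \<delta> where "\<delta> = a / (real K + 1)"
  have d0: "0 < \<delta>" unfolding \<delta>_def using a0 by simp
  show ?thesis
  proof (intro exI[of _ \<delta>] conjI allI impI d0)
    fix t assume Tt: "TT t < \<delta>"
    have T0: "0 \<le> TT t" by (rule TT_nonneg)
    have "MM t \<le> real K * TT t + (GG - (\<Sum>i<K. gg i))" by (rule MM_bound)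
    then have "TT t + MM t \<le> (real K + 1) * TT t + a" using K by (simp add: algebra_simps)
    also have "(real K + 1) * TT t \<le> (real K + 1) * \<delta>" using Tt by (intro mult_left_mono) auto
    also have "(real K + 1) * \<delta> = a" unfolding \<delta>_def by simp
    finally have TM: "TT t + MM t \<le> 2 * a" by simp
    have "nF * cR * (TT t + MM t) \<le> nF * cR * (2 * a)"
      using TM nF0 cR_nonneg by (intro mult_left_mono) auto
    also have "\<dots> = e / 2 * (nF / (nF + 1))"
    proof -
      have p1: "cR \<noteq> 0" using cR_ge1 by simp
      have p2: "nF + 1 \<noteq> 0" using nF0 by simp
      show ?thesis unfolding a_def using p1 p2 by (simp add: divide_simps)
    qed
    also have "\<dots> \<le> e / 2" using e nF0 by (intro mult_left_le) (auto simp: field_simps)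
    finally have err: "nF * cR * (TT t + MM t) \<le> e / 2" .
    have "ennreal (cR * TT t) \<le> ennreal (measure M (Hs t)) + ennreal (nF * (cR * TT t * (TT t + MM t))) + ennreal (TT t) * ennreal tR"
    proof -
      have "prob (Hs t) = prob (UU t)" unfolding measure_def using Hs_UU[of t] by simp
      then show ?thesis
        using lower_e[OF F, of t] unfolding tailF_eq nF_def by (simp add: emeasure_eq_measure)
    qed
    also have "\<dots> = ennreal (measure M (Hs t) + nF * (cR * TT t * (TT t + MM t)) + TT t * tR)"
    proof -
      have P0: "0 \<le> measure M (Hs t)" by simp
      have X0: "0 \<le> nF * (cR * TT t * (TT t + MM t))" using nF0 cR_nonneg T0 MM_nonneg by simp
      have Y0: "0 \<le> TT t * tR" using T0 tR0 by simp
      have m: "ennreal (TT t) * ennreal tR = ennreal (TT t * tR)" using T0 tR0 by (simp add: ennreal_mult)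
      have "ennreal (measure M (Hs t) + nF * (cR * TT t * (TT t + MM t)) + TT t * tR)
          = ennreal (measure M (Hs t) + nF * (cR * TT t * (TT t + MM t))) + ennreal (TT t * tR)"
        by (rule ennreal_plus[OF add_nonneg_nonneg[OF P0 X0] Y0])
      also have "ennreal (measure M (Hs t) + nF * (cR * TT t * (TT t + MM t))) = ennreal (measure M (Hs t)) + ennreal (nF * (cR * TT t * (TT t + MM t)))"
        by (rule ennreal_plus[OF P0 X0])
      finally show ?thesis unfolding m by simp
    qed
    finally have "cR * TT t \<le> measure M (Hs t) + nF * (cR * TT t * (TT t + MM t)) + TT t * tR"
      using nF0 cR_nonneg T0 MM_nonneg tR0 by (subst (asm) ennreal_le_iff) auto
    moreover have "nF * (cR * TT t * (TT t + MM t)) \<le> TT t * (e / 2)"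
    proof -
      have "nF * (cR * TT t * (TT t + MM t)) = TT t * (nF * cR * (TT t + MM t))" by (simp add: algebra_simps)
      also have "\<dots> \<le> TT t * (e / 2)" by (rule mult_left_mono[OF err T0])
      finally show ?thesis .
    qed
    moreover have "TT t * tR \<le> TT t * (e / 2)" using tRe T0 by (intro mult_left_mono) auto
    ultimately show "(cR - e) * TT t \<le> measure M (Hs t)" by (simp add: algebra_simps)
  qed
qed

end

lemma squeeze_lim:
  fixes xs p :: "nat \<Rightarrow> real"
  assumes xs: "xs \<longlonglongrightarrow> L" and up: "\<And>n. p n \<le> c * xs n" and nn: "\<And>n. 0 \<le> xs n"
    and low: "\<And>e. 0 < e \<Longrightarrow> eventually (\<lambda>n. (c - e) * xs n \<le> p n) sequentially"
  shows "p \<longlonglongrightarrow> c * L"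
proof -
  have L0: "0 \<le> L" using xs nn by (intro LIMSEQ_le_const) auto
  have "(\<lambda>n. p n - c * xs n) \<longlonglongrightarrow> 0"
  proof (rule tendstoI)
    fix r :: real assume r: "0 < r"
    define e where "e = r / (L + 2)"
    have e0: "0 < e" using r L0 by (simp add: e_def)
    have ev1: "eventually (\<lambda>n. xs n < L + 1) sequentially"
      using xs by (intro order_tendstoD(2)) auto
    show "eventually (\<lambda>n. dist (p n - c * xs n) 0 < r) sequentially"
      using ev1 low[OF e0]
    proof eventually_elim
      case (elim n)
      have "\<bar>p n - c * xs n\<bar> \<le> e * xs n" using elim up[of n] by (simp add: algebra_simps abs_le_iff)
      also have "\<dots> \<le> e * (L + 1)" using elim e0 by (intro mult_left_mono) auto
      also have "\<dots> < r" unfolding e_def using r L0 by (simp add: field_simps)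
      finally show ?case by simp
    qed
  qed
  then have "(\<lambda>n. (p n - c * xs n) + c * xs n) \<longlonglongrightarrow> 0 + c * L"
    by (intro tendsto_add tendsto_mult tendsto_const xs)
  then show ?thesis by simp
qed

lemma evd_rescale:
  assumes G: "extreme_value_df G" and c: "0 < c"
  shows "\<exists>\<alpha>>0. \<exists>\<beta>. \<forall>x. 0 < G x \<longrightarrow> 0 < G (\<alpha> * x + \<beta>) \<and> c * - ln (G (\<alpha> * x + \<beta>)) = - ln (G x)"
  using G unfolding extreme_value_df_def
proof (elim disjE exE conjE)
  fix a assume a: "0 < a" and GF: "G = frechet a"
  define \<alpha> where "\<alpha> = c powr (1 / a)"
  have \<alpha>0: "0 < \<alpha>" unfolding \<alpha>_def using c by simp
  have "\<forall>x. 0 < G x \<longrightarrow> 0 < G (\<alpha> * x + 0) \<and> c * - ln (G (\<alpha> * x + 0)) = - ln (G x)"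
  proof (intro allI impI)
    fix x assume "0 < G x"
    then have x: "0 < x" unfolding GF frechet_def by (auto split: if_splits)
    have ax: "0 < \<alpha> * x" using x \<alpha>0 by simp
    have "(\<alpha> * x) powr (- a) = \<alpha> powr (- a) * x powr (- a)" by (rule powr_mult)
    also have "\<alpha> powr (- a) = c powr (-1)" unfolding \<alpha>_def using a by (simp add: powr_powr)
    also have "c powr (-1) = 1 / c" using c by (simp add: powr_neg_one)
    finally have "(\<alpha> * x) powr (- a) = x powr (- a) / c" by simp
    then show "0 < G (\<alpha> * x + 0) \<and> c * - ln (G (\<alpha> * x + 0)) = - ln (G x)"
      using ax x c unfolding GF frechet_def by simp
  qed
  then show ?thesis using \<alpha>0 by blast
next
  fix a assume a: "0 < a" and GW: "G = weibull a"
  define \<alpha> where "\<alpha> = c powr (- 1 / a)"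
  have \<alpha>0: "0 < \<alpha>" unfolding \<alpha>_def using c by simp
  have "\<forall>x. 0 < G x \<longrightarrow> 0 < G (\<alpha> * x + 0) \<and> c * - ln (G (\<alpha> * x + 0)) = - ln (G x)"
  proof (intro allI impI)
    fix x
    show "0 < G (\<alpha> * x + 0) \<and> c * - ln (G (\<alpha> * x + 0)) = - ln (G x)"
    proof (cases "x < 0")
      case True
      have ax: "\<alpha> * x < 0" using True \<alpha>0 by (simp add: mult_pos_neg)
      have "(- (\<alpha> * x)) powr a = \<alpha> powr a * (- x) powr a" using powr_mult[of \<alpha> "- x" a] by simp
      also have "\<alpha> powr a = c powr (-1)" unfolding \<alpha>_def using a by (simp add: powr_powr)
      also have "c powr (-1) = 1 / c" using c by (simp add: powr_neg_one)
      finally have "(- (\<alpha> * x)) powr a = (- x) powr a / c" by simp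
      then show ?thesis using ax True c unfolding GW weibull_def by simp
    next
      case False
      then have "\<not> \<alpha> * x < 0" using \<alpha>0 by (simp add: not_less)
      then show ?thesis using False unfolding GW weibull_def by simp
    qed
  qed
  then show ?thesis using \<alpha>0 by blast
next
  assume GG: "G = gumbel"
  have "\<forall>x. 0 < G x \<longrightarrow> 0 < G (1 * x + ln c) \<and> c * - ln (G (1 * x + ln c)) = - ln (G x)"
  proof (intro allI impI)
    fix x
    have "c * exp (- (x + ln c)) = exp (- x)" using c by (simp add: exp_diff)
    then show "0 < G (1 * x + ln c) \<and> c * - ln (G (1 * x + ln c)) = - ln (G x)"
      unfolding GG gumbel_def by simp
  qed
  then show ?thesis by (intro exI[of _ 1]) auto
qed

lemma MDA_transfer:
  fixes T P :: "real \<Rightarrow> real"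
  assumes G: "extreme_value_df G" and MT: "in_MDA G T" and c: "0 < c"
    and T0: "\<And>t. 0 \<le> T t" and up: "\<And>t. P t \<le> c * T t"
    and low: "\<And>e. 0 < e \<Longrightarrow> \<exists>\<delta>>0. \<forall>t. T t < \<delta> \<longrightarrow> (c - e) * T t \<le> P t"
  shows "in_MDA G P"
proof -
  obtain a b :: "nat \<Rightarrow> real" where a: "\<And>n. a n > 0"
    and conv: "\<And>x. G x > 0 \<Longrightarrow> (\<lambda>n. real n * T (a n * x + b n)) \<longlonglongrightarrow> - ln (G x)"
    using MT unfolding in_MDA_def by auto
  have step: "(\<lambda>n. real n * P (a n * y + b n)) \<longlonglongrightarrow> c * - ln (G y)" if y: "G y > 0" for y
  proof (rule squeeze_lim[OF conv[OF y]])
    show "real n * P (a n * y + b n) \<le> c * (real n * T (a n * y + b n))" for n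
    proof -
      have "real n * P (a n * y + b n) \<le> real n * (c * T (a n * y + b n))"
        using up[of "a n * y + b n"] by (intro mult_left_mono) auto
      then show ?thesis by (simp add: algebra_simps)
    qed
    show "0 \<le> real n * T (a n * y + b n)" for n using T0 by simp
    fix e :: real assume e: "0 < e"
    obtain \<delta> where d: "\<delta> > 0" "\<And>t. T t < \<delta> \<Longrightarrow> (c - e) * T t \<le> P t" using low[OF e] by auto
    have "(\<lambda>n. (real n * T (a n * y + b n)) * (1 / real n)) \<longlonglongrightarrow> (- ln (G y)) * 0"
      by (intro tendsto_mult conv[OF y] lim_1_over_n)
    moreover have "eventually (\<lambda>n. (real n * T (a n * y + b n)) * (1 / real n) = T (a n * y + b n)) sequentially"
      using eventually_gt_at_top[of 0] by eventually_elim simp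
    ultimately have "(\<lambda>n. T (a n * y + b n)) \<longlonglongrightarrow> 0"
      by (simp add: tendsto_cong)
    then have "eventually (\<lambda>n. T (a n * y + b n) < \<delta>) sequentially"
      using d(1) by (intro order_tendstoD(2)) auto
    then show "eventually (\<lambda>n. (c - e) * (real n * T (a n * y + b n)) \<le> real n * P (a n * y + b n)) sequentially"
    proof eventually_elim
      case (elim n)
      then have "(c - e) * T (a n * y + b n) \<le> P (a n * y + b n)" by (rule d(2))
      then have "real n * ((c - e) * T (a n * y + b n)) \<le> real n * P (a n * y + b n)"
        by (intro mult_left_mono) auto
      then show ?case by (simp add: algebra_simps)
    qed
  qed
  obtain \<alpha> \<beta> where \<alpha>: "\<alpha> > 0"
    and ab: "\<And>x. 0 < G x \<Longrightarrow> 0 < G (\<alpha> * x + \<beta>) \<and> c * - ln (G (\<alpha> * x + \<beta>)) = - ln (G x)"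
    using evd_rescale[OF G c] by blast
  have A1: "\<forall>n. 0 < a n * \<alpha>" using a \<alpha> by simp
  have A2: "\<forall>x\<in>{y. 0 < G y}. (\<lambda>n. real n * P (a n * \<alpha> * x + (a n * \<beta> + b n))) \<longlonglongrightarrow> - ln (G x)"
  proof
    fix x assume "x \<in> {y. 0 < G y}"
    then have x: "0 < G x" by simp
    have "(\<lambda>n. real n * P (a n * (\<alpha> * x + \<beta>) + b n)) \<longlonglongrightarrow> c * - ln (G (\<alpha> * x + \<beta>))"
      using step ab[OF x] by blast
    then show "(\<lambda>n. real n * P (a n * \<alpha> * x + (a n * \<beta> + b n))) \<longlonglongrightarrow> - ln (G x)"
      using ab[OF x] by (simp add: algebra_simps)
  qed
  show ?thesis
    unfolding in_MDA_def
    by (rule exI[of _ "\<lambda>n. a n * \<alpha>"], rule exI[of _ "\<lambda>n. a n * \<beta> + b n"]) (use A1 A2 in simp)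
qed

theorem mainTheorem6:
  fixes Q :: "'s::polish_space measure"
    and f :: "'s \<Rightarrow> real"
    and h :: "real \<Rightarrow> 's \<Rightarrow> real"
    and G :: "real \<Rightarrow> real"
    and M :: "'w measure"
    and A :: "nat list \<Rightarrow> 'w \<Rightarrow> 's"
    and N :: "nat list \<Rightarrow> 'w \<Rightarrow> nat"
  assumes Q_prob: "prob_space Q"
    and Q_borel: "sets Q = sets borel"
    and f_meas: "f \<in> borel_measurable Q"
    and f_nonneg: "\<And>a. f a \<ge> 0"
    and h_meas: "(\<lambda>(s, a). h s a) \<in> borel_measurable (borel \<Otimes>\<^sub>M Q)"
    and h_nonneg: "\<And>s a. h s a \<ge> 0"
    and kappa_lt_1: "(\<integral>\<^sup>+ a. hawkes_kappa h a \<partial>Q) < 1"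
    and G_evd: "extreme_value_df G"
    and M_prob: "prob_space M"
    and indep: "prob_space.indep_vars M (\<lambda>_. Q \<Otimes>\<^sub>M count_space UNIV)
                  (\<lambda>v \<omega>. (A v \<omega>, N v \<omega>)) UNIV"
    and law: "\<And>v B k. B \<in> sets Q \<Longrightarrow>
                measure M {\<omega> \<in> space M. A v \<omega> \<in> B \<and> N v \<omega> = k}
                = (\<integral>a\<in>B. poisson_prob (enn2real (hawkes_kappa h a)) k \<partial>Q)"
    and X_MDA: "in_MDA G (\<lambda>t. measure Q {a \<in> space Q. f a > t})"
  shows "in_MDA G (\<lambda>t. measure M {\<omega> \<in> space M.
                        cluster_max f (\<lambda>v. A v \<omega>) (\<lambda>v. N v \<omega>) > t})"
proof -
  interpret H: hawkes Q f h M A N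
    by (rule hawkes.intro[OF Q_prob f_meas h_meas h_nonneg kappa_lt_1 M_prob indep law])
  show ?thesis
  proof (rule MDA_transfer[OF G_evd X_MDA])
    show "0 < H.cR" using H.cR_ge1 by simp
    show "0 \<le> measure Q {a \<in> space Q. f a > t}" for t by simp
    show "measure M {\<omega> \<in> space M. cluster_max f (\<lambda>v. A v \<omega>) (\<lambda>v. N v \<omega>) > t} \<le> H.cR * measure Q {a \<in> space Q. f a > t}" for t
      using H.upper[of t] unfolding H.Hs_def H.TT_def .
    fix e :: real assume "0 < e"
    from H.lower[OF this]
    show "\<exists>\<delta>>0. \<forall>t. measure Q {a \<in> space Q. f a > t} < \<delta> \<longrightarrow> (H.cR - e) * measure Q {a \<in> space Q. f a > t} \<le> measure M {\<omega> \<in> space M. cluster_max f (\<lambda>v. A v \<omega>) (\<lambda>v. N v \<omega>) > t}"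
      unfolding H.Hs_def H.TT_def .
  qed
qed

end
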